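(* For every $\bar\tau\in(0,1)$ there exist $\bar\rho,\bar R,\bar\phi,\bar\epsilon>0$ such that the following holds. Let $p,q\in\mathbb{H}^n\setminus\{0\}$, $t,\tilde t\ge1$, $R>1$, $\epsilon>0$, and $r\ge\tilde r\ge t\tilde tR$ with $\tilde r\le\epsilon r$, and suppose $q\in\partial_tB_r(p)$ and $0\in\partial_tB_r(p)\cap\partial_{\tilde t}B_{\tilde r}(q)$. If $R>\bar R$, $\epsilon<\bar\epsilon$, $|\tau_p|\le\bar\tau$ and $\max_{1\le i\le n}\phi_i(p,q)<\bar\phi$, then $d(\hat p,\hat q)>\bar\rho$.
   Context: $\mathbb{H}^n=\mathbb{C}^n\times\mathbb{R}$ with product $(z,\tau)(w,\sigma)=(z+w,\tau+\sigma+\tfrac12\operatorname{Im}\langle z,w\rangle)$, $\langle z,w\rangle=\sum_j\overline{z_j}w_j$, identity $0$; dilations $\delta_\lambda(z,\tau)=(\lambda z,\lambda^2\tau)$; $d(p,q)=\inf\{r>0:\delta_{1/r}(pq^{-1})\in B_{eucl}\}$ ($B_{eucl}$ the closed Euclidean unit ball in $\mathbb{R}^{2n+1}$), so the unit sphere of $d$ about $0$ is the Euclidean unit sphere. $B_r(p)=\{y:d(y,p)\le r\}$, $\partial B_r(p)=\{y:d(y,p)=r\}$, $\partial_tB_r(p)=\{y:d(y,\partial B_r(p))\le t\}$. For $p\ne0$ let $\hat p=\delta_{1/d(p,0)}p=(z_p,\tau_p)$, so $\|z_p\|^2+\tau_p^2=1$; write $(z_p)_j=\rho_j(p)e^{i\phi_j(p)}$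 with $\rho_j(p)\ge0$, $\phi_j(p)\in(-\pi,\pi]$. For $p,q\ne0$, $\phi_j(p,q)\in[0,\pi]$ is the magnitude of the angle between $e^{i\phi_j(p)}$ and $e^{i\phi_j(q)}$. *)

theory Defs
  imports "HOL-Analysis.Analysis"
begin

text \<open>Points of the Heisenberg group H^n = C^n x R; the dimension n is the
cardinality of the finite index type 'n.\<close>
type_synonym ('n) heis = "(complex ^ 'n) \<times> real"

definition herm :: "complex ^ ('n::finite) \<Rightarrow> complex ^ 'n \<Rightarrow> complex" where
  "herm z w = (\<Sum>j\<in>UNIV. cnj (z $ j) * w $ j)"

definition heis_mult :: "('n::finite) heis \<Rightarrow> 'n heis \<Rightarrow> 'n heis" where
  "heis_mult p q = (fst p + fst q, snd p + snd q + Im (herm (fst p) (fst q)) / 2)"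

definition heis_inv :: "('n::finite) heis \<Rightarrow> 'n heis" where
  "heis_inv p = (- fst p, - snd p)"

definition heis_dil :: "real \<Rightarrow> ('n::finite) heis \<Rightarrow> 'n heis" where
  "heis_dil l p = (l *\<^sub>R fst p, l\<^sup>2 * snd p)"

definition in_eucl_ball :: "('n::finite) heis \<Rightarrow> bool" where
  "in_eucl_ball p \<longleftrightarrow> (\<Sum>j\<in>UNIV. (cmod (fst p $ j))\<^sup>2) + (snd p)\<^sup>2 \<le> 1"

definition heis_dist :: "('n::finite) heis \<Rightarrow> 'n heis \<Rightarrow> real" where
  "heis_dist p q = Inf {r. r > 0 \<and> in_eucl_ball (heis_dil (1 / r) (heis_mult p (heis_inv q)))}"

definition heis_sphere :: "real \<Rightarrow> ('n::finite) heis \<Rightarrow> 'n heis set" where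
  "heis_sphere r p = {y. heis_dist y p = r}"

definition setdist_heis :: "('n::finite) heis \<Rightarrow> 'n heis set \<Rightarrow> real" where
  "setdist_heis y S = Inf ((\<lambda>s. heis_dist y s) ` S)"

definition shell :: "real \<Rightarrow> real \<Rightarrow> ('n::finite) heis \<Rightarrow> 'n heis set" where
  "shell t r p = {y. setdist_heis y (heis_sphere r p) \<le> t}"

definition hat :: "('n::finite) heis \<Rightarrow> 'n heis" where
  "hat p = heis_dil (1 / heis_dist p 0) p"

text \<open>phi_j(p) in (-pi,pi]: argument of the j-th coordinate of z_p (Arg 0 = 0).\<close>
definition phase :: "'n::finite \<Rightarrow> 'n heis \<Rightarrow> real" where
  "phase j p = Arg (fst (hat p) $ j)"

text \<open>phi_j(p,q) in [0,pi]: magnitude of the angle between e^{i phi_j(p)} and e^{i phi_j(q)}.\<close>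
definition phase_angle :: "'n::finite \<Rightarrow> 'n heis \<Rightarrow> 'n heis \<Rightarrow> real" where
  "phase_angle j p q = arccos (cos (phase j p - phase j q))"

end

theory Submission
  imports Defs
begin


definition Nf :: "('n::finite) heis \<Rightarrow> real" where
  "Nf x = sqrt (((norm (fst x))\<^sup>2 + sqrt ((norm (fst x))^4 + 4 * (snd x)\<^sup>2)) / 2)"

lemma norm_sq_sum: "(norm (z :: complex ^ 'n::finite))\<^sup>2 = (\<Sum>j\<in>UNIV. (cmod (z $ j))\<^sup>2)"
  by (simp add: norm_vec_def L2_set_def sum_nonneg)

lemma Nf_nonneg: "Nf x \<ge> 0" unfolding Nf_def by simp

lemma Nf_eq: "(Nf x)^4 = (norm (fst x))\<^sup>2 * (Nf x)\<^sup>2 + (snd x)\<^sup>2"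
proof -
  define n where "n = (norm (fst x))\<^sup>2"
  define S where "S = sqrt (n^2 + 4 * (snd x)\<^sup>2)"
  have n0: "n \<ge> 0" unfolding n_def by simp
  have S0: "S \<ge> 0" unfolding S_def by simp
  have S2: "S^2 = n^2 + 4 * (snd x)\<^sup>2" unfolding S_def by simp
  have m0: "(n + S)/2 \<ge> 0" using n0 S0 by simp
  have N2: "(Nf x)\<^sup>2 = (n + S)/2" unfolding Nf_def n_def S_def
    using m0 unfolding n_def S_def by (simp add: power4_eq_xxxx power2_eq_square)
  have "(Nf x)^4 = ((Nf x)\<^sup>2)\<^sup>2" by simp
  also have "\<dots> = n * ((n+S)/2) + (snd x)\<^sup>2" unfolding N2 using S2
    by (simp add: power2_eq_square field_simps)
  finally show ?thesis using N2 n_def by simp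
qed

lemma Nf_le_iff:
  assumes r: "r > 0"
  shows "Nf x \<le> r \<longleftrightarrow> (norm (fst x))\<^sup>2 * r\<^sup>2 + (snd x)\<^sup>2 \<le> r^4"
proof -
  define n where "n = (norm (fst x))\<^sup>2"
  define S where "S = sqrt (n^2 + 4 * (snd x)\<^sup>2)"
  have n0: "n \<ge> 0" unfolding n_def by simp
  have S0: "S \<ge> 0" unfolding S_def by simp
  have S2: "S^2 = n^2 + 4 * (snd x)\<^sup>2" unfolding S_def by simp
  have "Nf x = sqrt ((n + S)/2)" unfolding Nf_def n_def S_def by (simp add: power4_eq_xxxx power2_eq_square)
  then have "Nf x \<le> r \<longleftrightarrow> (n+S)/2 \<le> r^2"
    using r n0 S0 by (metis real_sqrt_le_iff real_sqrt_unique less_imp_le zero_le_power2)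
  also have "\<dots> \<longleftrightarrow> S \<le> 2*r^2 - n" by auto
  also have "\<dots> \<longleftrightarrow> (2*r^2 - n \<ge> 0 \<and> S^2 \<le> (2*r^2 - n)^2)"
    using S0 by (smt (verit) power2_le_imp_le power_mono)
  also have "\<dots> \<longleftrightarrow> n * r^2 + (snd x)\<^sup>2 \<le> r^4"
  proof
    assume h: "0 \<le> 2 * r\<^sup>2 - n \<and> S\<^sup>2 \<le> (2 * r\<^sup>2 - n)\<^sup>2"
    then show "n * r\<^sup>2 + (snd x)\<^sup>2 \<le> r ^ 4" unfolding S2 by (simp add: power2_eq_square power4_eq_xxxx algebra_simps)
  next
    assume h: "n * r\<^sup>2 + (snd x)\<^sup>2 \<le> r ^ 4"
    have "r^2 * (r^2 - n) \<ge> 0" using h by (simp add: power2_eq_square power4_eq_xxxx algebra_simps) (smt (verit) zero_le_square)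
    then have "r^2 \<ge> n" using r by (simp add: zero_le_mult_iff)
    then show "0 \<le> 2 * r\<^sup>2 - n \<and> S\<^sup>2 \<le> (2 * r\<^sup>2 - n)\<^sup>2" unfolding S2 using h n0
      by (simp add: power2_eq_square power4_eq_xxxx algebra_simps)
  qed
  finally show ?thesis unfolding n_def .
qed


lemma in_ball_dil:
  assumes r: "r > 0"
  shows "in_eucl_ball (heis_dil (1/r) x) \<longleftrightarrow> Nf x \<le> r"
proof -
  have "in_eucl_ball (heis_dil (1/r) x) \<longleftrightarrow> (norm ((1/r) *\<^sub>R fst x))\<^sup>2 + ((1/r)\<^sup>2 * snd x)\<^sup>2 \<le> 1"
    unfolding in_eucl_ball_def heis_dil_def
    by (simp add: norm_sq_sum power_divide sum_divide_distrib[symmetric])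
  also have "\<dots> \<longleftrightarrow> (norm (fst x))\<^sup>2 * r\<^sup>2 + (snd x)\<^sup>2 \<le> r^4"
    using r by (simp add: power2_eq_square power4_eq_xxxx field_simps)
  finally show ?thesis using Nf_le_iff[OF r, of x] by blast
qed

lemma heis_dist_Nf: "heis_dist x y = Nf (heis_mult x (heis_inv y))"
proof -
  define N where "N = Nf (heis_mult x (heis_inv y))"
  have "{r. r > 0 \<and> in_eucl_ball (heis_dil (1 / r) (heis_mult x (heis_inv y)))} = {r. r > 0 \<and> N \<le> r}"
    using in_ball_dil unfolding N_def by blast
  moreover have "Inf {r. r > 0 \<and> N \<le> r} = N"
  proof (cases "N = 0")
    case True
    then have "{r. r > 0 \<and> N \<le> r} = {0<..}" by auto
    then show ?thesis using True by simp
  next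
    case False
    then have "N > 0" using Nf_nonneg N_def by (simp add: less_le)
    then have "{r. r > 0 \<and> N \<le> r} = {N..}" by auto
    then show ?thesis by simp
  qed
  ultimately show ?thesis unfolding heis_dist_def N_def by simp
qed

lemma herm_add_left: "herm (a + b) c = herm a c + herm b c"
  by (simp add: herm_def distrib_right sum.distrib)
lemma herm_add_right: "herm a (b + c) = herm a b + herm a c"
  by (simp add: herm_def distrib_left sum.distrib)
lemma herm_minus_left: "herm (- a) c = - herm a c"
  by (simp add: herm_def sum_negf)
lemma herm_minus_right: "herm a (- c) = - herm a c"
  by (simp add: herm_def sum_negf)
lemma herm_diff_left: "herm (a - b) c = herm a c - herm b c"
  by (simp add: herm_def left_diff_distrib sum_subtractf)
lemma comp_scale: "(s *\<^sub>R a) $ j = complex_of_real s * a $ j"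
  by (metis scaleR_conv_of_real vector_scaleR_component)
lemma herm_scale_left: "herm (s *\<^sub>R a) c = complex_of_real s * herm a c"
  unfolding herm_def comp_scale by (simp add: sum_distrib_left mult.assoc)
lemma herm_scale_right: "herm a (s *\<^sub>R c) = complex_of_real s * herm a c"
  unfolding herm_def comp_scale by (simp add: sum_distrib_left mult.left_commute)
lemma herm_swap: "herm b a = cnj (herm a b)"
  by (simp add: herm_def mult.commute)
lemma Im_herm_self: "Im (herm a a) = 0"
  by (simp add: herm_def Im_sum algebra_simps)
lemma Re_herm: "Re (herm a b) = inner a b"
  by (simp add: herm_def Re_sum inner_vec_def inner_complex_def)
lemma herm_bound: "cmod (herm a b) \<le> norm a * norm b"
proof -
  have "cmod (herm a b) \<le> (\<Sum>j\<in>UNIV. cmod (cnj (a$j) * b$j))"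
    unfolding herm_def by (rule norm_sum)
  also have "\<dots> = (\<Sum>j\<in>UNIV. \<bar>cmod (a$j)\<bar> * \<bar>cmod (b$j)\<bar>)" by (simp add: norm_mult)
  also have "\<dots> \<le> norm a * norm b" unfolding norm_vec_def by (rule L2_set_mult_ineq)
  finally show ?thesis .
qed
lemma Im_herm_bound: "\<bar>Im (herm a b)\<bar> \<le> norm a * norm b"
  using abs_Im_le_cmod herm_bound order_trans by blast

lemma heis_assoc: "heis_mult (heis_mult x y) w = heis_mult x (heis_mult y w)"
  by (simp add: heis_mult_def herm_add_left herm_add_right) (simp add: field_simps)
lemma heis_inv_cancel: "heis_mult (heis_inv x) (heis_mult x y) = y"
  by (simp add: heis_mult_def heis_inv_def herm_add_right herm_minus_left Im_herm_self)
lemma heis_inv_mult: "heis_inv (heis_mult x y) = heis_mult (heis_inv y) (heis_inv x)"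
  by (simp add: heis_mult_def heis_inv_def herm_minus_left herm_minus_right algebra_simps herm_swap[of "fst y"])
lemma heis_inv_inv: "heis_inv (heis_inv x) = x"
  by (simp add: heis_inv_def)
lemma Nf_inv: "Nf (heis_inv x) = Nf x"
  by (simp add: Nf_def heis_inv_def)
lemma heis_dist_sym: "heis_dist x y = heis_dist y x"
  unfolding heis_dist_Nf by (metis Nf_inv heis_inv_inv heis_inv_mult)

lemma poly_tri:
  fixes a b Z W T S :: real
  assumes a: "a \<ge> 0" and b: "b \<ge> 0" and Z: "0 \<le> Z" "Z \<le> a" and W: "0 \<le> W" "W \<le> b"
    and T: "0 \<le> T" "T \<le> a\<^sup>2" and S: "0 \<le> S" "S \<le> b\<^sup>2"
    and eq: "a^4 = Z\<^sup>2 * a\<^sup>2 + T\<^sup>2"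
  shows "(Z+W)\<^sup>2 * (a + 3*b)\<^sup>2 + (T + S + Z*W/2)\<^sup>2 \<le> (a+3*b)^4"
proof -
  define l where "l = a + 3*b"
  have l: "l \<ge> a" "l \<ge> 0" using a b unfolding l_def by auto
  have 1: "(Z+W)\<^sup>2 * l\<^sup>2 \<le> (Z+b)\<^sup>2 * l\<^sup>2"
    by (intro mult_right_mono power_mono) (use Z W in auto)
  have 2: "(T + S + Z*W/2)\<^sup>2 \<le> (T + b\<^sup>2 + Z*b/2)\<^sup>2"
    by (intro power_mono) (use Z W T S in \<open>auto intro!: add_mono mult_left_mono\<close>)
  have 3: "(Z+b)\<^sup>2 * l\<^sup>2 + (T + b\<^sup>2 + Z*b/2)\<^sup>2 = a^4 + Z\<^sup>2*(l\<^sup>2 - a\<^sup>2) + 2*Z*b*l\<^sup>2 + b\<^sup>2*l\<^sup>2 + 2*T*b\<^sup>2 + T*Z*b + (b\<^sup>2 + Z*b/2)\<^sup>2"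
    using eq by (simp add: power2_eq_square algebra_simps)
  have la: "l\<^sup>2 - a\<^sup>2 \<ge> 0" using l a by (simp add: power_mono)
  have 4: "Z\<^sup>2*(l\<^sup>2 - a\<^sup>2) \<le> a\<^sup>2*(l\<^sup>2 - a\<^sup>2)" using la Z by (intro mult_right_mono power_mono) auto
  have 5: "2*Z*b*l\<^sup>2 \<le> 2*a*b*l\<^sup>2" using Z b by (intro mult_right_mono) auto
  have 6: "2*T*b\<^sup>2 \<le> 2*a\<^sup>2*b\<^sup>2" using T b by (simp add: mult_right_mono)
  have 7: "T*Z*b \<le> a\<^sup>2*a*b" using T Z b by (intro mult_right_mono mult_mono) auto
  have 8: "(b\<^sup>2 + Z*b/2)\<^sup>2 \<le> (b\<^sup>2 + a*b/2)\<^sup>2" using Z b by (intro power_mono) (auto intro: mult_right_mono)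
  have 9: "a^4 + a\<^sup>2*(l\<^sup>2 - a\<^sup>2) + 2*a*b*l\<^sup>2 + b\<^sup>2*l\<^sup>2 + 2*a\<^sup>2*b\<^sup>2 + a\<^sup>2*a*b + (b\<^sup>2 + a*b/2)\<^sup>2 \<le> l^4"
    unfolding l_def using a b by (simp add: power2_eq_square power4_eq_xxxx algebra_simps)
  show ?thesis using 1 2 3 4 5 6 7 8 9 unfolding l_def by linarith
qed

lemma Nf_bounds: "norm (fst x) \<le> Nf x" "\<bar>snd x\<bar> \<le> (Nf x)\<^sup>2"
proof -
  define n where "n = (norm (fst x))\<^sup>2"
  define S where "S = sqrt (n^2 + 4 * (snd x)\<^sup>2)"
  have n0: "n \<ge> 0" unfolding n_def by simp
  have S0: "S \<ge> 0" unfolding S_def by simp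
  have m0: "(n + S)/2 \<ge> 0" using n0 S0 by simp
  have N2: "(Nf x)\<^sup>2 = (n + S)/2" unfolding Nf_def n_def S_def
    using m0 unfolding n_def S_def by (simp add: power4_eq_xxxx power2_eq_square)
  have "sqrt (n^2) \<le> S" unfolding S_def by (rule real_sqrt_le_mono) simp
  then have Sn: "S \<ge> n" using n0 by simp
  have "sqrt (4 * (snd x)\<^sup>2) \<le> S" unfolding S_def by (rule real_sqrt_le_mono) simp
  moreover have "sqrt (4 * (snd x)\<^sup>2) = 2 * \<bar>snd x\<bar>" by (simp add: real_sqrt_mult)
  ultimately have St: "S \<ge> 2 * \<bar>snd x\<bar>" by simp
  have "(norm (fst x))\<^sup>2 \<le> (Nf x)\<^sup>2" using N2 Sn n_def by simp
  then show "norm (fst x) \<le> Nf x" using Nf_nonneg power2_le_imp_le by blast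
  show "\<bar>snd x\<bar> \<le> (Nf x)\<^sup>2" using N2 St n0 by simp
qed

lemma Nf_tri: "Nf (heis_mult x y) \<le> Nf x + 3 * Nf y"
proof -
  define a where "a = Nf x"
  define b where "b = Nf y"
  have a0: "a \<ge> 0" and b0: "b \<ge> 0" using Nf_nonneg[of x] Nf_nonneg[of y] a_def b_def by auto
  show ?thesis
  proof (cases "a + 3*b = 0")
    case True
    then have "a = 0" "b = 0" using a0 b0 by auto
    then have "norm (fst x) = 0" "snd x = 0" "norm (fst y) = 0" "snd y = 0"
      using Nf_bounds[of x] Nf_bounds[of y] a_def b_def by (auto simp: norm_le_zero_iff)
    then have "heis_mult x y = 0" unfolding heis_mult_def by (simp add: herm_def prod_eq_iff)
    then show ?thesis using a0 b0 True a_def b_def by (simp add: Nf_def zero_prod_def)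
  next
    case False
    then have l: "a + 3*b > 0" using a0 b0 by auto
    have P: "(norm (fst x) + norm (fst y))\<^sup>2 * (a + 3*b)\<^sup>2 + (\<bar>snd x\<bar> + \<bar>snd y\<bar> + norm (fst x) * norm (fst y)/2)\<^sup>2 \<le> (a+3*b)^4"
      apply (rule poly_tri[OF a0 b0])
      using Nf_bounds[of x] Nf_bounds[of y] Nf_eq[of x] a_def b_def by auto
    have n1: "norm (fst x + fst y) \<le> norm (fst x) + norm (fst y)" by (rule norm_triangle_ineq)
    have i1: "\<bar>snd x + snd y + Im (herm (fst x) (fst y)) / 2\<bar> \<le> \<bar>snd x\<bar> + \<bar>snd y\<bar> + norm (fst x) * norm (fst y)/2"
      using Im_herm_bound[of "fst x" "fst y"] by linarith
    have "(norm (fst x + fst y))\<^sup>2 * (a + 3*b)\<^sup>2 + (snd x + snd y + Im (herm (fst x) (fst y)) / 2)\<^sup>2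
       \<le> (norm (fst x) + norm (fst y))\<^sup>2 * (a + 3*b)\<^sup>2 + (\<bar>snd x\<bar> + \<bar>snd y\<bar> + norm (fst x) * norm (fst y)/2)\<^sup>2"
    proof -
      have sq1: "(norm (fst x + fst y))\<^sup>2 \<le> (norm (fst x) + norm (fst y))\<^sup>2"
        by (rule power_mono[OF n1]) simp
      have sq2: "(snd x + snd y + Im (herm (fst x) (fst y)) / 2)\<^sup>2 \<le> (\<bar>snd x\<bar> + \<bar>snd y\<bar> + norm (fst x) * norm (fst y)/2)\<^sup>2"
        using power_mono[OF i1 abs_ge_zero, of 2] by simp
      show ?thesis by (rule add_mono[OF mult_right_mono[OF sq1 zero_le_power2] sq2])
    qed
    with P have "Nf (heis_mult x y) \<le> a + 3*b"
      unfolding Nf_le_iff[OF l] heis_mult_def fst_conv snd_conv by linarith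
    then show ?thesis unfolding a_def b_def .
  qed
qed

lemma Nf_tri2: "Nf (heis_mult x y) \<le> 3 * Nf x + Nf y"
  by (metis Nf_inv Nf_tri add.commute heis_inv_mult)

lemma main_ineq:
  fixes al u A B Rn I ta tb :: real
  assumes al: "0 < al" "al \<le> 1" and u: "0 < u" "u \<le> al/10"
    and A: "al \<le> A" "A \<le> 1" and B: "0 \<le> B" "B \<le> 1"
    and Rn: "A - al/6 \<le> Rn" "Rn \<le> 1" and I: "\<bar>I\<bar> \<le> al/6"
    and ta: "ta\<^sup>2 = 1 - A" and tb: "\<bar>tb\<bar> \<le> 1"
  shows "(u\<^sup>2*B - 2*u*Rn + A) * (1 - al/4*u)\<^sup>2 + (u\<^sup>2*tb - ta - u*I/2)\<^sup>2 \<le> (1 - al/4*u)^4"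
proof -
  define rho where "rho = al/6"
  define c where "c = al/4"
  define e where "e = u*I/2 - u\<^sup>2*tb"
  have u1: "u \<le> 1" using u al by simp
  have "\<bar>u*I/2\<bar> \<le> u*rho/2" using I u unfolding rho_def by (simp add: abs_mult mult_left_mono)
  moreover have "\<bar>u\<^sup>2*tb\<bar> \<le> u\<^sup>2" using tb by (simp add: abs_mult mult_left_le)
  ultimately have ee: "\<bar>e\<bar> \<le> u*rho/2 + u\<^sup>2" unfolding e_def by linarith
  have rho1: "rho \<le> 1" unfolding rho_def using al by simp
  have "u*rho \<le> u" using u rho1 by (simp add: mult_left_le)
  moreover have "u*u \<le> u*(1/10)" using u al by (intro mult_left_mono) auto
  ultimately have "u*rho/2 + u\<^sup>2 \<le> u" using u unfolding power2_eq_square by linarith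
  then have e1: "\<bar>e\<bar> \<le> u" using ee by linarith
  have "ta\<^sup>2 \<le> 1" using ta A al by simp
  then have ta1: "\<bar>ta\<bar> \<le> 1" by (simp add: abs_square_le_1)
  have "(u\<^sup>2*tb - ta - u*I/2)\<^sup>2 = (ta + e)\<^sup>2" unfolding e_def by (simp add: power2_eq_square algebra_simps)
  also have "\<dots> = ta\<^sup>2 + 2*ta*e + e\<^sup>2" by (simp add: power2_eq_square algebra_simps)
  also have "\<dots> \<le> (1 - A) + (u*rho + 2*u\<^sup>2) + u\<^sup>2"
  proof -
    have "2*ta*e \<le> 2*\<bar>ta\<bar>*\<bar>e\<bar>" by (simp add: abs_mult[symmetric])
    also have "\<dots> \<le> 2*\<bar>e\<bar>" using ta1 by (simp add: mult_left_le_one_le)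
    finally have "2*ta*e \<le> u*rho + 2*u\<^sup>2" using ee by linarith
    moreover have "e\<^sup>2 \<le> u\<^sup>2" using power_mono[OF e1 abs_ge_zero, of 2] by simp
    ultimately show ?thesis using ta by linarith
  qed
  finally have E2: "(u\<^sup>2*tb - ta - u*I/2)\<^sup>2 \<le> 1 - A + u*rho + 3*u\<^sup>2" by simp
  define X where "X = u\<^sup>2*B - 2*u*Rn + A"
  have "u\<^sup>2*B \<le> u\<^sup>2" using B by (simp add: mult_left_le)
  moreover have "2*u*Rn \<ge> 2*u*(A - rho)" using Rn u unfolding rho_def by simp
  ultimately have Xu: "X \<le> u\<^sup>2 - 2*u*(A - rho) + A" unfolding X_def by linarith
  have "2*u*Rn \<le> 2*u" using Rn u by simp
  then have "X \<ge> A - 2*u" unfolding X_def using B by (smt (verit) zero_le_mult_iff zero_le_power2)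
  then have Xl: "X \<ge> A/2" using u A by linarith
  have "al*u \<le> 1*1" using al u1 u by (intro mult_mono) auto
  then have cu: "0 \<le> c*u" "c*u \<le> 1" using al u unfolding c_def by auto
  have k2: "(1 - c*u)\<^sup>2 \<le> 1 - c*u" using cu by (simp add: power2_eq_square mult_left_le_one_le)
  have "X * (1 - c*u)\<^sup>2 \<le> X * (1 - c*u)" using Xl A al k2 by (intro mult_left_mono) auto
  also have "\<dots> = X - c*u*X" by (simp add: algebra_simps)
  also have "\<dots> \<le> X - c*u*(A/2)" using mult_left_mono[OF Xl cu(1)] by linarith
  finally have E1: "X * (1 - c*u)\<^sup>2 \<le> u\<^sup>2 - 2*u*(A - rho) + A - c*u*(A/2)" using Xu by linarith
  have k4: "(1 - c*u)^4 \<ge> 1 - 4*(c*u)"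
  proof -
    have "(1 - c*u)^4 = 1 - 4*(c*u) + (c*u)\<^sup>2 * (6 - 4*(c*u) + (c*u)\<^sup>2)"
      by (simp add: power2_eq_square power4_eq_xxxx algebra_simps)
    moreover have "6 - 4*(c*u) + (c*u)\<^sup>2 \<ge> 0" using cu by (smt (verit) zero_le_power2)
    ultimately show ?thesis by simp
  qed
  have fin: "1 - 2*u*A - c*u*(A/2) + 3*u*rho + 4*u\<^sup>2 \<le> 1 - 4*(c*u)"
  proof -
    have h3: "u*(A*al) \<ge> 0" using u A al by simp
    have h2: "u\<^sup>2 \<le> u*al/10" using u by (simp add: power2_eq_square mult_left_mono)
    have h1: "u*A \<ge> u*al" using u A by simp
    have e1: "2*u*A = 2*(u*A)" "c*u*(A/2) = (u*(A*al))/8" "3*u*rho = (u*al)/2" "4*(c*u) = u*al"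
      unfolding c_def rho_def by (simp_all add: algebra_simps)
    have h4: "u*al \<ge> 0" using u al by simp
    show ?thesis unfolding e1 using h1 h2 h3 h4 by linarith
  qed
  show ?thesis using E1 E2 k4 fin unfolding X_def c_def by (simp add: algebra_simps)
qed

lemma heis_mult_inv_right: "heis_mult x (heis_inv x) = 0"
  by (simp add: heis_mult_def heis_inv_def herm_minus_right Im_herm_self zero_prod_def)
lemma herm_zero_right: "herm a 0 = 0" by (simp add: herm_def)
lemma herm_zero_left: "herm 0 a = 0" by (simp add: herm_def)
lemma heis_mult_zero_right: "heis_mult x 0 = x"
  by (simp add: heis_mult_def zero_prod_def herm_zero_right)
lemma heis_mult_zero_left: "heis_mult 0 x = x"
  by (simp add: heis_mult_def zero_prod_def herm_zero_left)
lemma heis_inv_zero: "heis_inv 0 = 0" by (simp add: heis_inv_def zero_prod_def)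
lemma dist_zero_left: "heis_dist 0 s = Nf s"
  by (simp add: heis_dist_Nf heis_mult_zero_left Nf_inv)
lemma dist_zero_right: "heis_dist s 0 = Nf s"
  by (simp add: heis_dist_Nf heis_inv_zero heis_mult_zero_right)

lemma Nf_vert: "r \<ge> 0 \<Longrightarrow> Nf (0, r\<^sup>2) = r"
  by (simp add: Nf_def real_sqrt_mult power4_eq_xxxx power2_eq_square)

lemma sphere_ne: assumes "r \<ge> 0" shows "heis_sphere r p \<noteq> {}"
proof -
  define y where "y = heis_mult (0, r\<^sup>2) p"
  have "heis_mult y (heis_inv p) = (0, r\<^sup>2)"
    unfolding y_def heis_assoc heis_mult_inv_right heis_mult_zero_right ..
  then have "heis_dist y p = r" using Nf_vert[OF assms] by (simp add: heis_dist_Nf)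
  then have "y \<in> heis_sphere r p" unfolding heis_sphere_def by simp
  then show ?thesis by blast
qed

lemma shell_pt:
  assumes "x \<in> shell t r p" "t > 0" "r \<ge> 0"
  shows "\<exists>s. heis_dist s p = r \<and> heis_dist x s < 2*t"
proof -
  have "Inf ((\<lambda>s. heis_dist x s) ` heis_sphere r p) < 2*t"
    using assms unfolding shell_def setdist_heis_def by auto
  then obtain d where "d \<in> (\<lambda>s. heis_dist x s) ` heis_sphere r p" "d < 2*t"
    using cInf_lessD sphere_ne[OF assms(3)] by (metis image_is_empty)
  then show ?thesis unfolding heis_sphere_def by auto
qed





lemma main_lemma:
  fixes p q :: "('n::finite) heis"
  assumes al: "0 < al" "al \<le> 1" "al = 1 - taub\<^sup>2" and taub: "0 < taub"
    and t: "t \<ge> 1" and tt: "tt \<ge> 1" and rrt: "r \<ge> rt" and rtR: "rt \<ge> t * tt * R"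
    and reps: "rt \<le> eps * r"
    and sq: "q \<in> shell t r p" and s0: "0 \<in> shell t r p" and s0q: "0 \<in> shell tt rt q"
    and RR: "R > 96/al" and ee: "eps < al/40" and tp: "\<bar>snd (hat p)\<bar> \<le> taub"
  shows "heis_dist (hat p) (hat q) > al/6"
proof (rule ccontr)
  assume "\<not> heis_dist (hat p) (hat q) > al/6"
  then have close: "heis_dist (hat p) (hat q) \<le> al/6" by simp
  have "96/al \<ge> 96" using al by (simp add: le_divide_eq)
  then have R96: "R \<ge> 96" using RR by linarith
  have "t * tt * R \<ge> 1 * tt * R" using t tt R96 by (intro mult_right_mono) auto
  then have rt1: "rt \<ge> tt * R" using rtR by simp
  have "t * tt * R \<ge> t * 1 * R" using t tt R96 by (intro mult_right_mono mult_left_mono) auto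
  then have rt2: "rt \<ge> t * R" using rtR by simp
  have "tt * R \<ge> tt * 96" using tt R96 by (intro mult_left_mono) auto
  then have rt3: "rt \<ge> 96 * tt" using rt1 by linarith
  have "t * R \<ge> t * 96" using t R96 by (intro mult_left_mono) auto
  then have rt4: "rt \<ge> 96 * t" using rt2 by linarith
  have rpos: "r \<ge> 0" "rt \<ge> 0" using rt4 rrt t by auto
  obtain s1 where s1: "heis_dist s1 p = r" "heis_dist 0 s1 < 2*t" using shell_pt[OF s0] t rpos by force
  obtain s2 where s2: "heis_dist s2 p = r" "heis_dist q s2 < 2*t" using shell_pt[OF sq] t rpos by force
  obtain s3 where s3: "heis_dist s3 q = rt" "heis_dist 0 s3 < 2*tt" using shell_pt[OF s0q] tt rpos by force
  define rho where "rho = Nf p"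
  define s where "s = Nf q"
  have "Nf (heis_inv p) \<le> 3 * Nf (heis_inv s1) + Nf (heis_mult s1 (heis_inv p))"
    using Nf_tri2[of "heis_inv s1" "heis_mult s1 (heis_inv p)"] by (simp add: heis_inv_cancel)
  then have rho1: "rho \<le> 3 * Nf s1 + r" using s1 unfolding rho_def by (simp add: Nf_inv heis_dist_Nf)
  have "r \<le> 3 * Nf s1 + rho" using Nf_tri2[of s1 "heis_inv p"] s1 unfolding rho_def by (simp add: Nf_inv heis_dist_Nf)
  then have rho_b: "rho \<ge> r - 6*t" "rho \<le> r + 6*t" using rho1 s1 by (auto simp: dist_zero_left)
  have "Nf (heis_inv q) \<le> 3 * Nf (heis_inv s3) + Nf (heis_mult s3 (heis_inv q))"
    using Nf_tri2[of "heis_inv s3" "heis_mult s3 (heis_inv q)"] by (simp add: heis_inv_cancel)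
  then have sq1: "s \<le> 3 * Nf s3 + rt" using s3 unfolding s_def by (simp add: Nf_inv heis_dist_Nf)
  have "rt \<le> 3 * Nf s3 + s" using Nf_tri2[of s3 "heis_inv q"] s3 unfolding s_def by (simp add: Nf_inv heis_dist_Nf)
  then have s_b: "s \<ge> rt - 6*tt" "s \<le> rt + 6*tt" using sq1 s3 by (auto simp: dist_zero_left)
  have "heis_mult (heis_mult s2 (heis_inv q)) (heis_mult q (heis_inv p)) = heis_mult s2 (heis_inv p)"
    by (simp add: heis_assoc heis_inv_cancel)
  then have "r \<le> 3 * Nf (heis_mult s2 (heis_inv q)) + Nf (heis_mult q (heis_inv p))"
    using Nf_tri2[of "heis_mult s2 (heis_inv q)" "heis_mult q (heis_inv p)"] s2 by (simp add: heis_dist_Nf)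
  moreover have "Nf (heis_mult s2 (heis_inv q)) < 2*t" using s2 heis_dist_sym[of q s2] by (simp add: heis_dist_Nf)
  ultimately have qp_low: "Nf (heis_mult q (heis_inv p)) > r - 6*t" by linarith
  have rho_pos: "rho > 0" and rho_r: "rho \<ge> r/2" using rho_b rt4 rrt t by auto
  have s_pos: "s > 0" and s_lo: "s \<ge> rt/2" and s_hi: "s \<le> 2*rt" using s_b rt3 tt by auto
  define u where "u = s / rho"
  have u_pos: "u > 0" unfolding u_def using s_pos rho_pos by simp
  have s_eq: "s = u * rho" unfolding u_def using rho_pos by simp
  have "u * (r/2) \<le> u * rho" using u_pos rho_r by (intro mult_left_mono) auto
  then have "u * r \<le> 4 * rt" using s_eq s_hi by linarith
  also have "\<dots> \<le> 4 * (eps * r)" using reps by simp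
  finally have "u * r \<le> (4*eps) * r" by simp
  moreover have "r > 0" using rt4 rrt t by auto
  ultimately have "u \<le> 4*eps" by simp
  then have u_le: "u \<le> al/10" using ee by simp
  define Za where "Za = (1/rho) *\<^sub>R fst p"
  define ta where "ta = (1/rho)\<^sup>2 * snd p"
  define Zb where "Zb = (1/s) *\<^sub>R fst q"
  define tb where "tb = (1/s)\<^sup>2 * snd q"
  have hp: "hat p = (Za, ta)" unfolding hat_def heis_dil_def dist_zero_right Za_def ta_def rho_def by simp
  have hq: "hat q = (Zb, tb)" unfolding hat_def heis_dil_def dist_zero_right Zb_def tb_def s_def by simp
  have Zp: "fst p = rho *\<^sub>R Za" unfolding Za_def using rho_pos by simp
  have Tp: "snd p = rho\<^sup>2 * ta" unfolding ta_def using rho_pos by (simp add: field_simps)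
  have Zq: "fst q = s *\<^sub>R Zb" unfolding Zb_def using s_pos by simp
  have Tq: "snd q = s\<^sup>2 * tb" unfolding tb_def using s_pos by (simp add: field_simps)
  have "rho^4 = (norm (fst p))\<^sup>2 * rho\<^sup>2 + (snd p)\<^sup>2" using Nf_eq[of p] unfolding rho_def .
  moreover have "(norm (fst p))\<^sup>2 * rho\<^sup>2 + (snd p)\<^sup>2 = rho^4 * ((norm Za)\<^sup>2 + ta\<^sup>2)" unfolding Zp Tp
    using rho_pos by (simp add: power2_eq_square power4_eq_xxxx algebra_simps abs_mult)
  ultimately have "rho^4 = rho^4 * ((norm Za)\<^sup>2 + ta\<^sup>2)" by simp
  then have Aeq: "(norm Za)\<^sup>2 + ta\<^sup>2 = 1" using rho_pos by simp
  have "s^4 = (norm (fst q))\<^sup>2 * s\<^sup>2 + (snd q)\<^sup>2" using Nf_eq[of q] unfolding s_def .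
  moreover have "(norm (fst q))\<^sup>2 * s\<^sup>2 + (snd q)\<^sup>2 = s^4 * ((norm Zb)\<^sup>2 + tb\<^sup>2)" unfolding Zq Tq
    using s_pos by (simp add: power2_eq_square power4_eq_xxxx algebra_simps abs_mult)
  ultimately have "s^4 = s^4 * ((norm Zb)\<^sup>2 + tb\<^sup>2)" by simp
  then have Beq: "(norm Zb)\<^sup>2 + tb\<^sup>2 = 1" using s_pos by simp
  define A where "A = (norm Za)\<^sup>2"
  define B where "B = (norm Zb)\<^sup>2"
  have "\<bar>ta\<bar> \<le> taub" using tp hp by simp
  then have "ta\<^sup>2 \<le> taub\<^sup>2" by (metis abs_ge_zero power2_abs power_mono)
  then have A_lo: "A \<ge> al" using Aeq al unfolding A_def by linarith
  have A_hi: "A \<le> 1" using Aeq zero_le_power2[of ta] unfolding A_def by linarith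
  have B_b: "0 \<le> B" "B \<le> 1" using Beq zero_le_power2[of tb] unfolding B_def by (simp, linarith)
  have "tb\<^sup>2 \<le> 1" using Beq zero_le_power2[of "norm Zb"] by linarith
  then have tb1: "\<bar>tb\<bar> \<le> 1" by (simp add: abs_square_le_1)
  have nZa: "norm Za \<le> 1" using A_hi unfolding A_def by (simp add: power_le_one_iff abs_square_le_1)
  have rhob: "al/6 > 0" using al by simp
  have "Nf (heis_mult (hat p) (heis_inv (hat q))) \<le> al/6" using close by (simp add: heis_dist_Nf)
  then have "(norm (Za - Zb))\<^sup>2 * (al/6)\<^sup>2 + (snd (heis_mult (hat p) (heis_inv (hat q))))\<^sup>2 \<le> (al/6)^4"
    unfolding Nf_le_iff[OF rhob] hp hq by (simp add: heis_mult_def heis_inv_def)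
  then have "(norm (Za - Zb))\<^sup>2 * (al/6)\<^sup>2 \<le> (al/6)\<^sup>2 * (al/6)\<^sup>2"
  proof -
    have "(al/6)^4 = (al/6)\<^sup>2 * (al/6)\<^sup>2" by (simp add: power4_eq_xxxx power2_eq_square)
    then show ?thesis using \<open>(norm (Za - Zb))\<^sup>2 * (al/6)\<^sup>2 + (snd (heis_mult (hat p) (heis_inv (hat q))))\<^sup>2 \<le> (al/6)^4\<close> zero_le_power2[of "snd (heis_mult (hat p) (heis_inv (hat q)))"] by linarith
  qed
  then have "(norm (Za - Zb))\<^sup>2 \<le> (al/6)\<^sup>2" using rhob
    by (metis mult_right_le_imp_le zero_less_power)
  then have "norm (Za - Zb) \<le> al/6" by (rule power2_le_imp_le) (use rhob in simp)
  then have dab: "norm (Zb - Za) \<le> al/6" by (simp add: norm_minus_commute)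
  define Rn where "Rn = inner Zb Za"
  define I where "I = Im (herm Zb Za)"
  have "Rn = A + inner (Zb - Za) Za" unfolding Rn_def A_def by (simp add: inner_diff_left power2_norm_eq_inner)
  moreover have "\<bar>inner (Zb - Za) Za\<bar> \<le> al/6"
  proof -
    have "\<bar>inner (Zb - Za) Za\<bar> \<le> norm (Zb - Za) * norm Za" by (rule Cauchy_Schwarz_ineq2)
    also have "\<dots> \<le> al/6 * 1" using dab nZa al by (intro mult_mono) auto
    finally show ?thesis by simp
  qed
  ultimately have Rn_lo: "A - al/6 \<le> Rn" by linarith
  have "Rn \<le> norm Zb * norm Za" unfolding Rn_def by (rule norm_cauchy_schwarz)
  also have "\<dots> \<le> 1 * 1" using nZa B_b unfolding B_def
    by (intro mult_mono) (auto simp: power_le_one_iff abs_square_le_1)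
  finally have Rn_hi: "Rn \<le> 1" by simp
  have "I = Im (herm (Zb - Za) Za)" unfolding I_def by (simp add: herm_diff_left Im_herm_self)
  then have "\<bar>I\<bar> \<le> norm (Zb - Za) * norm Za" using Im_herm_bound by simp
  also have "\<dots> \<le> al/6 * 1" using dab nZa al by (intro mult_mono) auto
  finally have I_b: "\<bar>I\<bar> \<le> al/6" by simp
  have ta2: "ta\<^sup>2 = 1 - A" using Aeq unfolding A_def by simp
  have K: "(u\<^sup>2*B - 2*u*Rn + A) * (1 - al/4*u)\<^sup>2 + (u\<^sup>2*tb - ta - u*I/2)\<^sup>2 \<le> (1 - al/4*u)^4"
    by (rule main_ineq[OF al(1,2) u_pos u_le A_lo A_hi B_b Rn_lo Rn_hi I_b ta2 tb1])
  define k where "k = 1 - al/4*u"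
  have k_pos: "k > 0"
  proof -
    have h1: "u \<le> 1/10" using u_le al(2) by linarith
    have h2: "al/4 \<le> 1/4" using al(2) by linarith
    have "al/4*u \<le> (1/4)*(1/10)" using h1 h2 u_pos by (intro mult_mono) auto
    then show ?thesis unfolding k_def by simp
  qed
  have lam: "rho * k > 0" using rho_pos k_pos by simp
  have fqp: "fst (heis_mult q (heis_inv p)) = s *\<^sub>R Zb - rho *\<^sub>R Za"
    unfolding heis_mult_def heis_inv_def using Zp Zq by simp
  have "(norm (s *\<^sub>R Zb - rho *\<^sub>R Za))\<^sup>2 = s\<^sup>2 * B - 2 * (s * rho) * Rn + rho\<^sup>2 * A"
    unfolding B_def A_def Rn_def power2_norm_eq_inner
    by (simp add: inner_diff_left inner_diff_right inner_commute algebra_simps power2_eq_square)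
  also have "\<dots> = rho\<^sup>2 * (u\<^sup>2*B - 2*u*Rn + A)" unfolding s_eq by (simp add: power2_eq_square algebra_simps)
  finally have n1: "(norm (fst (heis_mult q (heis_inv p))))\<^sup>2 = rho\<^sup>2 * (u\<^sup>2*B - 2*u*Rn + A)" using fqp by simp
  have "snd (heis_mult q (heis_inv p)) = s\<^sup>2 * tb - rho\<^sup>2 * ta + Im (herm (s *\<^sub>R Zb) (- (rho *\<^sub>R Za))) / 2"
    unfolding heis_mult_def heis_inv_def using Zp Zq Tp Tq by simp
  also have "\<dots> = rho\<^sup>2 * (u\<^sup>2*tb - ta - u*I/2)"
    unfolding herm_minus_right herm_scale_left herm_scale_right I_def s_eq
    by (simp add: power2_eq_square algebra_simps)
  finally have n2: "snd (heis_mult q (heis_inv p)) = rho\<^sup>2 * (u\<^sup>2*tb - ta - u*I/2)" .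
  have "(norm (fst (heis_mult q (heis_inv p))))\<^sup>2 * (rho*k)\<^sup>2 + (snd (heis_mult q (heis_inv p)))\<^sup>2
      = rho^4 * ((u\<^sup>2*B - 2*u*Rn + A) * k\<^sup>2 + (u\<^sup>2*tb - ta - u*I/2)\<^sup>2)"
    unfolding n1 n2 by (simp add: power2_eq_square power4_eq_xxxx algebra_simps)
  also have "\<dots> \<le> rho^4 * k^4" using K rho_pos unfolding k_def by (intro mult_left_mono) auto
  also have "\<dots> = (rho*k)^4" by (simp add: power_mult_distrib)
  finally have "Nf (heis_mult q (heis_inv p)) \<le> rho * k" unfolding Nf_le_iff[OF lam] .
  then have "Nf (heis_mult q (heis_inv p)) \<le> rho - al/4 * s" unfolding k_def s_eq by (simp add: algebra_simps)
  with qp_low rho_b have "al/4 * s < 12 * t" by linarith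
  moreover have "al/4 * (rt/2) \<le> al/4 * s" using s_lo al by (intro mult_left_mono) auto
  ultimately have "al * rt < 96 * t" by simp
  moreover have "al * rt \<ge> al * (t * R)" using rt2 al by (intro mult_left_mono) auto
  moreover have "al * R > 96"
  proof -
    have "al*R > al*(96/al)" using RR al(1) by (intro mult_strict_left_mono)
    moreover have "al*(96/al) = 96" using al(1) by simp
    ultimately show ?thesis by (simp add: mult.commute)
  qed
  moreover have "al * (t * R) = t * (al * R)" by simp
  moreover have "t * (al * R) \<ge> t * 96" using t \<open>al * R > 96\<close> by (intro mult_left_mono) auto
  ultimately show False by linarith
qed


theorem lemma12:
  fixes taub :: real
  assumes "0 < taub" and "taub < 1"
  shows "\<exists>rhob Rb phib epsb. rhob > 0 \<and> Rb > 0 \<and> phib > 0 \<and> epsb > 0 \<and>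
    (\<forall>(p :: 'n::finite heis) q t tt R eps r rt.
       p \<noteq> 0 \<and> q \<noteq> 0 \<and> t \<ge> 1 \<and> tt \<ge> 1 \<and> R > 1 \<and> eps > 0 \<and>
       r \<ge> rt \<and> rt \<ge> t * tt * R \<and> rt \<le> eps * r \<and>
       q \<in> shell t r p \<and> 0 \<in> shell t r p \<and> 0 \<in> shell tt rt q \<and>
       R > Rb \<and> eps < epsb \<and> \<bar>snd (hat p)\<bar> \<le> taub \<and>
       Max (range (\<lambda>i. phase_angle i p q)) < phib
       \<longrightarrow> heis_dist (hat p) (hat q) > rhob)"
proof -
  define al where "al = 1 - taub\<^sup>2"
  have "taub\<^sup>2 < 1" using assms by (simp add: power_less_one_iff abs_square_less_1)
  then have al0: "0 < al" unfolding al_def by simp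
  have al1: "al \<le> 1" unfolding al_def by simp
  have main: "\<forall>(p :: 'n::finite heis) q t tt R eps r rt.
       p \<noteq> 0 \<and> q \<noteq> 0 \<and> t \<ge> 1 \<and> tt \<ge> 1 \<and> R > 1 \<and> eps > 0 \<and>
       r \<ge> rt \<and> rt \<ge> t * tt * R \<and> rt \<le> eps * r \<and>
       q \<in> shell t r p \<and> 0 \<in> shell t r p \<and> 0 \<in> shell tt rt q \<and>
       R > 96/al \<and> eps < al/40 \<and> \<bar>snd (hat p)\<bar> \<le> taub \<and>
       Max (range (\<lambda>i. phase_angle i p q)) < 1
       \<longrightarrow> heis_dist (hat p) (hat q) > al/6"
  proof (intro allI impI)
    fix p :: "'n heis" and q t tt R eps r rt
    assume H: "p \<noteq> 0 \<and> q \<noteq> 0 \<and> t \<ge> 1 \<and> tt \<ge> 1 \<and> R > 1 \<and> eps > 0 \<and>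
       r \<ge> rt \<and> rt \<ge> t * tt * R \<and> rt \<le> eps * r \<and>
       q \<in> shell t r p \<and> 0 \<in> shell t r p \<and> 0 \<in> shell tt rt q \<and>
       R > 96/al \<and> eps < al/40 \<and> \<bar>snd (hat p)\<bar> \<le> taub \<and>
       Max (range (\<lambda>i. phase_angle i p q)) < 1"
    show "heis_dist (hat p) (hat q) > al/6"
      by (rule main_lemma[OF al0 al1 al_def assms(1), where t=t and tt=tt and r=r and rt=rt and R=R and eps=eps and p=p and q=q]) (use H in auto)
  qed
  show ?thesis
    apply (rule exI[of _ "al/6"], rule exI[of _ "96/al"], rule exI[of _ "1::real"], rule exI[of _ "al/40"])
    using al0 main by simp
qed

end
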